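(* Let $\mathcal{F}=(\mathcal{F}_1,\dots,\mathcal{F}_k)$ be a generalized Galois flag of type $(s_1,\dots,s_k)$ on $\mathbb{F}_{q^n}$ with underlying Galois subflag $(\mathbb{F}_{q^{t_1}},\dots,\mathbb{F}_{q^{t_r}})$, let $\beta\in\mathbb{F}_{q^n}^\ast$ and $i\in\{1,\dots,r\}$. Then: (1) If $\beta\in\mathbb{F}_{q^{t_i}}^\ast$, then $d_S(\mathcal{F}_l,\mathcal{F}_l\beta)=0$ for every $l$ with $s_l\in\{t_i,\dots,t_r\}$. (2) If $\beta\notin\mathbb{F}_{q^{t_i}}^\ast$, then $d_S(\mathcal{F}_l,\mathcal{F}_l\beta)=2s_l$ for every $l$ with $s_l\le t_i$.
   Context: $q$ is a prime power, $\mathbb{F}_{q^n}$ is an $n$-dimensional $\mathbb{F}_q$-vector space; subspaces are $\mathbb{F}_q$-subspaces; $d_S(\mathcal{U},\mathcal{V})=\dim(\mathcal{U}+\mathcal{V})-\dim(\mathcal{U}\cap\mathcal{V})$. A flag is a chain $\{0\}\subsetneq\mathcal{F}_1\subsetneq\cdots\subsetneq\mathcal{F}_k\subsetneq\mathbb{F}_{q^n}$ of type $(\dim\mathcal{F}_1,\dots,\dim\mathcal{F}_k)$; a subflag is a flag whose subspaces all appear in the given flag. For divisors $t_1<\dots<t_r<n$ of $n$ with $t_i\mid t_{i+1}$, the Galois flag of type $(t_1,\dots,t_r)$ is $(\mathbb{F}_{q^{t_1}},\dots,\mathbb{F}_{q^{t_r}})$. A flag $\mathcal{F}$ of type $(s_1,\dots,s_k)$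 generalizes the Galois flag of type $(t_1,\dots,t_r)$ if $\{t_1,\dots,t_r\}\subsetneq\{s_1,\dots,s_k\}$, the subflag of $\mathcal{F}$ of type $(t_1,\dots,t_r)$ is that Galois flag, and at least one subspace of $\mathcal{F}$ is not a subfield; such $\mathcal{F}$ is a generalized Galois flag. Its underlying Galois subflag is its longest Galois subflag (the subflag formed by all its subspaces that are subfields of $\mathbb{F}_{q^n}$). *)

theory Defs
  imports "HOL-Algebra.Embedded_Algebras"
begin

text \<open>F_{q^n} is modelled as a finite field R; F_q is a subfield K of R (q = card K);
  subspaces are K-subspaces of R (library notion subalgebra K V R, i.e. an additive
  subgroup closed under multiplication by K); dimensions are ring.dim R K.\<close>

definition subspace_dist :: "('a, 'b) ring_scheme \<Rightarrow> 'a set \<Rightarrow> 'a set \<Rightarrow> 'a set \<Rightarrow> nat" where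
  "subspace_dist R K U V = ring.dim R K (U <+>\<^bsub>R\<^esub> V) - ring.dim R K (U \<inter> V)"

definition scal_mult :: "('a, 'b) ring_scheme \<Rightarrow> 'a set \<Rightarrow> 'a \<Rightarrow> 'a set" where
  "scal_mult R U \<beta> = (\<lambda>u. u \<otimes>\<^bsub>R\<^esub> \<beta>) ` U"

text \<open>The subfield F_{q^t} of R, i.e. the set of roots of X^(q^t) - X in R.\<close>
definition GF_sub :: "('a, 'b) ring_scheme \<Rightarrow> nat \<Rightarrow> nat \<Rightarrow> 'a set" where
  "GF_sub R q t = {x \<in> carrier R. x [^]\<^bsub>R\<^esub> (q ^ t) = x}"

definition is_flag :: "('a, 'b) ring_scheme \<Rightarrow> 'a set \<Rightarrow> nat \<Rightarrow> (nat \<Rightarrow> 'a set) \<Rightarrow> bool" where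
  "is_flag R K k F \<longleftrightarrow> 1 \<le> k \<and> (\<forall>l\<in>{1..k}. subalgebra K (F l) R)
     \<and> {\<zero>\<^bsub>R\<^esub>} \<subset> F 1 \<and> (\<forall>l\<in>{1..<k}. F l \<subset> F (Suc l)) \<and> F k \<subset> carrier R"

definition flag_type :: "('a, 'b) ring_scheme \<Rightarrow> 'a set \<Rightarrow> (nat \<Rightarrow> 'a set) \<Rightarrow> nat \<Rightarrow> nat" where
  "flag_type R K F l = ring.dim R K (F l)"

definition galois_type :: "nat \<Rightarrow> nat \<Rightarrow> (nat \<Rightarrow> nat) \<Rightarrow> bool" where
  "galois_type n r t \<longleftrightarrow> 1 \<le> r \<and> (\<forall>j\<in>{1..r}. 0 < t j \<and> t j dvd n)
     \<and> (\<forall>j\<in>{1..<r}. t j < t (Suc j) \<and> t j dvd t (Suc j)) \<and> t r < n"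

definition generalizes_galois :: "('a, 'b) ring_scheme \<Rightarrow> 'a set \<Rightarrow> nat \<Rightarrow> nat \<Rightarrow> (nat \<Rightarrow> 'a set)
     \<Rightarrow> nat \<Rightarrow> (nat \<Rightarrow> nat) \<Rightarrow> bool" where
  "generalizes_galois R K n k F r t \<longleftrightarrow> is_flag R K k F \<and> galois_type n r t
     \<and> t ` {1..r} \<subset> flag_type R K F ` {1..k}
     \<and> (\<forall>j\<in>{1..r}. \<forall>l\<in>{1..k}. flag_type R K F l = t j \<longrightarrow> F l = GF_sub R (card K) (t j))
     \<and> (\<exists>l\<in>{1..k}. \<not> subfield (F l) R)"

text \<open>Underlying Galois subflag of F is the Galois flag of type t: the subspaces of F
  that are subfields are exactly those of dimension t_1,...,t_r.\<close>
definition underlying_galois :: "('a, 'b) ring_scheme \<Rightarrow> 'a set \<Rightarrow> nat \<Rightarrow> (nat \<Rightarrow> 'a set)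
     \<Rightarrow> nat \<Rightarrow> (nat \<Rightarrow> nat) \<Rightarrow> bool" where
  "underlying_galois R K k F r t \<longleftrightarrow>
     (\<forall>l\<in>{1..k}. subfield (F l) R \<longleftrightarrow> flag_type R K F l \<in> t ` {1..r})"

end

theory Submission imports Defs begin

lemma (in domain) dim_scal_aux:
  assumes "dimension n K E" and b: "\<beta> \<in> carrier R" "\<beta> \<noteq> \<zero>"
  shows "K \<subseteq> carrier R \<Longrightarrow> dimension n K ((\<lambda>u. u \<otimes> \<beta>) ` E) \<and> E \<subseteq> carrier R"
  using assms(1)
proof (induction rule: dimension.induct)
  case (zero_dim K)
  then show ?case using b by auto
next
  case (Suc_dim v E n K')
  have Ec: "E \<subseteq> carrier R" and D: "dimension n K' ((\<lambda>u. u \<otimes> \<beta>) ` E)" using Suc_dim by auto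
  have img: "(\<lambda>u. u \<otimes> \<beta>) ` line_extension K' v E = line_extension K' (v \<otimes> \<beta>) ((\<lambda>u. u \<otimes> \<beta>) ` E)"
  proof
    show "(\<lambda>u. u \<otimes> \<beta>) ` line_extension K' v E \<subseteq> line_extension K' (v \<otimes> \<beta>) ((\<lambda>u. u \<otimes> \<beta>) ` E)"
    proof
      fix x assume "x \<in> (\<lambda>u. u \<otimes> \<beta>) ` line_extension K' v E"
      then obtain k e where ke: "k \<in> K'" "e \<in> E" "x = (k \<otimes> v \<oplus> e) \<otimes> \<beta>"
        using line_extension_mem_iff by auto
      have "x = k \<otimes> (v \<otimes> \<beta>) \<oplus> e \<otimes> \<beta>"
        using ke Ec Suc_dim b by (simp add: l_distr m_assoc subsetD)
      thus "x \<in> line_extension K' (v \<otimes> \<beta>) ((\<lambda>u. u \<otimes> \<beta>) ` E)"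
        using ke line_extension_mem_iff by auto
    qed
  next
    show "line_extension K' (v \<otimes> \<beta>) ((\<lambda>u. u \<otimes> \<beta>) ` E) \<subseteq> (\<lambda>u. u \<otimes> \<beta>) ` line_extension K' v E"
    proof
      fix x assume "x \<in> line_extension K' (v \<otimes> \<beta>) ((\<lambda>u. u \<otimes> \<beta>) ` E)"
      then obtain k e where ke: "k \<in> K'" "e \<in> E" "x = k \<otimes> (v \<otimes> \<beta>) \<oplus> e \<otimes> \<beta>"
        using line_extension_mem_iff by auto
      have kc: "k \<in> carrier R" and ec: "e \<in> carrier R" using ke Ec Suc_dim by auto
      have "x = (k \<otimes> v \<oplus> e) \<otimes> \<beta>"
        using ke kc ec Suc_dim b by (simp add: l_distr m_assoc)
      moreover have "k \<otimes> v \<oplus> e \<in> line_extension K' v E" using ke line_extension_mem_iff by auto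
      ultimately show "x \<in> (\<lambda>u. u \<otimes> \<beta>) ` line_extension K' v E" by auto
    qed
  qed
  have nv: "v \<otimes> \<beta> \<notin> (\<lambda>u. u \<otimes> \<beta>) ` E"
  proof
    assume "v \<otimes> \<beta> \<in> (\<lambda>u. u \<otimes> \<beta>) ` E"
    then obtain e where e: "e \<in> E" "v \<otimes> \<beta> = e \<otimes> \<beta>" by auto
    hence "v = e" using m_rcancel[OF b(2) b(1)] Ec Suc_dim by auto
    thus False using e Suc_dim by auto
  qed
  have "dimension (Suc n) K' (line_extension K' (v \<otimes> \<beta>) ((\<lambda>u. u \<otimes> \<beta>) ` E))"
    by (rule dimension.Suc_dim) (use Suc_dim b nv D in auto)
  moreover have "line_extension K' v E \<subseteq> carrier R"
    using line_extension_in_carrier Suc_dim Ec by auto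
  ultimately show ?case using img by simp
qed

lemma (in domain) dim_scal:
  assumes K: "subfield K R" and "dimension n K E" and b: "\<beta> \<in> carrier R" "\<beta> \<noteq> \<zero>"
  shows "dimension n K ((\<lambda>u. u \<otimes> \<beta>) ` E)"
  using dim_scal_aux[OF assms(2) b] subfieldE(3)[OF K] by auto

lemma (in ring) dim_strict:
  assumes K: "subfield K R" and V: "finite_dimension K V" and U: "subalgebra K U R" and UV: "U \<subset> V"
  shows "dim K U < dim K V"
proof -
  have fU: "finite_dimension K U" using subalbegra_incl_imp_finite_dimension[OF K V U] UV by auto
  have dU: "dimension (dim K U) K U" using finite_dimensionE[OF K fU] by (simp add: over_def)
  have dV: "dimension (dim K V) K V" using finite_dimensionE[OF K V] by (simp add: over_def)
  obtain Us where Us: "set Us \<subseteq> carrier R" "independent K Us" "length Us = dim K U" "Span K Us = U"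
    using exists_base[OF K dU] by blast
  have sV: "set Us \<subseteq> V" using Span_base_incl[OF K Us(1)] Us(4) UV by auto
  have "length Us \<le> dim K V" using independent_length_le_dimension[OF K dV Us(2) sV] .
  moreover have "length Us \<noteq> dim K V"
    using independent_length_eq_dimension[OF K dV Us(2) sV] Us(4) UV by auto
  ultimately show ?thesis using Us(3) by auto
qed

lemma (in cring) GF_mult:
  assumes "x \<in> GF_sub R q t" "y \<in> GF_sub R q t" shows "x \<otimes> y \<in> GF_sub R q t"
  using assms unfolding GF_sub_def by (auto simp: nat_pow_distrib)

lemma (in monoid) GF_pow_iter:
  assumes "x \<in> carrier G" "x [^] (m::nat) = x" shows "x [^] (m ^ c) = x"
proof (induction c)
  case 0 thus ?case using assms by simp
next
  case (Suc c)
  have "x [^] (m ^ Suc c) = (x [^] (m ^ c)) [^] m"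
    using assms by (simp add: nat_pow_pow mult.commute)
  thus ?case using Suc assms by simp
qed

lemma (in ring) GF_dvd:
  assumes "a dvd b" shows "GF_sub R q a \<subseteq> GF_sub R q b"
proof
  fix x assume x: "x \<in> GF_sub R q a"
  obtain c where c: "b = a * c" using assms by auto
  have "x [^] ((q ^ a) ^ c) = x" using GF_pow_iter[of x "q ^ a" c] x unfolding GF_sub_def by auto
  thus "x \<in> GF_sub R q b" using x c unfolding GF_sub_def by (simp add: power_mult)
qed

lemma flag_mono:
  assumes "is_flag R K k F" "1 \<le> l" "l \<le> l'" "l' \<le> k"
  shows "F l \<subseteq> F l'" and "l < l' \<Longrightarrow> F l \<subset> F l'"
proof -
  have step: "\<And>j. 1 \<le> j \<Longrightarrow> j < k \<Longrightarrow> F j \<subset> F (Suc j)" using assms(1) unfolding is_flag_def by auto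
  have "\<And>d. l + d \<le> k \<Longrightarrow> F l \<subseteq> F (l + d) \<and> (0 < d \<longrightarrow> F l \<subset> F (l + d))"
  proof -
    fix d show "l + d \<le> k \<Longrightarrow> F l \<subseteq> F (l + d) \<and> (0 < d \<longrightarrow> F l \<subset> F (l + d))"
    proof (induction d)
      case 0 thus ?case by simp
    next
      case (Suc d)
      have "F (l + d) \<subset> F (Suc (l + d))" using step[of "l + d"] Suc.prems assms(2) by auto
      thus ?case using Suc by auto
    qed
  qed
  from this[of "l' - l"] assms show "F l \<subseteq> F l'" and "l < l' \<Longrightarrow> F l \<subset> F l'" by auto
qed

lemma galois_dvd:
  assumes "galois_type n r t" "1 \<le> i" "i \<le> j" "j \<le> r"
  shows "t i dvd t j"
proof -
  have step: "\<And>j. 1 \<le> j \<Longrightarrow> j < r \<Longrightarrow> t j dvd t (Suc j)" using assms(1) unfolding galois_type_def by auto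
  have "\<And>d. i + d \<le> r \<Longrightarrow> t i dvd t (i + d)"
  proof -
    fix d show "i + d \<le> r \<Longrightarrow> t i dvd t (i + d)"
    proof (induction d)
      case 0 thus ?case by simp
    next
      case (Suc d)
      have "t (i + d) dvd t (Suc (i + d))" using step[of "i + d"] Suc.prems assms(2) by auto
      thus ?case using Suc dvd_trans by auto
    qed
  qed
  from this[of "j - i"] assms show ?thesis by auto
qed

theorem mainTheorem4:
  fixes R :: "('a, 'b) ring_scheme" (structure)
    and K :: "'a set" and n k r i :: nat and F :: "nat \<Rightarrow> 'a set" and t :: "nat \<Rightarrow> nat"
    and \<beta> :: 'a
  assumes "field R" and "finite (carrier R)" and "subfield K R"
    and "ring.dimension R n K (carrier R)"
    and "generalizes_galois R K n k F r t"
    and "underlying_galois R K k F r t"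
    and "\<beta> \<in> carrier R" and "\<beta> \<noteq> \<zero>"
    and "i \<in> {1..r}"
  shows "(\<beta> \<in> GF_sub R (card K) (t i) - {\<zero>} \<longrightarrow>
            (\<forall>l\<in>{1..k}. flag_type R K F l \<in> t ` {i..r} \<longrightarrow>
                subspace_dist R K (F l) (scal_mult R (F l) \<beta>) = 0))
       \<and> (\<beta> \<notin> GF_sub R (card K) (t i) - {\<zero>} \<longrightarrow>
            (\<forall>l\<in>{1..k}. flag_type R K F l \<le> t i \<longrightarrow>
                subspace_dist R K (F l) (scal_mult R (F l) \<beta>) = 2 * flag_type R K F l))"
proof -
  interpret field R by fact
  note K = \<open>subfield K R\<close>
  define q where "q = card K"
  have flag: "is_flag R K k F" and gt: "galois_type n r t"
    and tsub: "t ` {1..r} \<subseteq> flag_type R K F ` {1..k}"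
    and gal: "\<And>j l. j \<in> {1..r} \<Longrightarrow> l \<in> {1..k} \<Longrightarrow> flag_type R K F l = t j \<Longrightarrow> F l = GF_sub R q (t j)"
    using assms(5) unfolding generalizes_galois_def q_def by auto
  have fc: "finite_dimension K (carrier R)" using finite_dimensionI[OF assms(4)] .
  have sub: "\<And>l. l \<in> {1..k} \<Longrightarrow> subalgebra K (F l) R" using flag unfolding is_flag_def by auto
  have fd: "\<And>l. l \<in> {1..k} \<Longrightarrow> finite_dimension K (F l)"
    using subalbegra_incl_imp_finite_dimension[OF K fc] sub subalgebra_in_carrier by blast
  have dimF: "\<And>l. l \<in> {1..k} \<Longrightarrow> dimension (flag_type R K F l) K (F l)"
    using finite_dimensionE[OF K fd] unfolding flag_type_def over_def by blast
  have Fc: "\<And>l. l \<in> {1..k} \<Longrightarrow> F l \<subseteq> carrier R" using sub subalgebra_in_carrier by blast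
  have F0: "\<And>l. l \<in> {1..k} \<Longrightarrow> \<zero> \<in> F l"
    using dimF space_subgroup_props(2)[OF K] by blast
  have b: "\<beta> \<in> carrier R" "\<beta> \<noteq> \<zero>" by fact+
  show ?thesis
  proof (intro conjI impI ballI)
    fix l assume bG: "\<beta> \<in> GF_sub R (card K) (t i) - {\<zero>}" and l: "l \<in> {1..k}"
      and tl: "flag_type R K F l \<in> t ` {i..r}"
    obtain j where j: "j \<in> {i..r}" "flag_type R K F l = t j" using tl by auto
    have jr: "j \<in> {1..r}" using j assms(9) by auto
    have FG: "F l = GF_sub R q (t j)" using gal[OF jr l j(2)] .
    have "t i dvd t j" using galois_dvd[OF gt] j assms(9) by auto
    hence bj: "\<beta> \<in> F l" using GF_dvd[of "t i" "t j" q] bG FG q_def by auto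
    define U where "U = F l"
    have Uc: "U \<subseteq> carrier R" using Fc l U_def by auto
    have fU: "finite U" using Uc assms(2) finite_subset by auto
    have sm: "scal_mult R U \<beta> \<subseteq> U"
      unfolding scal_mult_def using GF_mult[of _ q "t j" \<beta>] bj FG U_def by auto
    have inj: "inj_on (\<lambda>u. u \<otimes> \<beta>) U"
      by (rule inj_onI) (use m_rcancel[OF b(2) b(1)] Uc in auto)
    have "card (scal_mult R U \<beta>) = card U" unfolding scal_mult_def using card_image[OF inj] .
    hence eq: "scal_mult R U \<beta> = U" using card_subset_eq[OF fU sm] by simp
    have "(dim over K) (U <+>\<^bsub>R\<^esub> U) = (dim over K) U + (dim over K) U - (dim over K) (U \<inter> U)"
      using sum_space_dim(2)[OF K fd[OF l] fd[OF l]] U_def by simp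
    thus "subspace_dist R K (F l) (scal_mult R (F l) \<beta>) = 0"
      unfolding subspace_dist_def using eq U_def by (simp add: over_def)
  next
    fix l assume bG: "\<beta> \<notin> GF_sub R (card K) (t i) - {\<zero>}" and l: "l \<in> {1..k}"
      and tl: "flag_type R K F l \<le> t i"
    define G where "G = GF_sub R q (t i)"
    have bnG: "\<beta> \<notin> G" using bG b G_def q_def by auto
    obtain l' where l': "l' \<in> {1..k}" "flag_type R K F l' = t i" using tsub assms(9) by force
    have Fl': "F l' = G" using gal[OF assms(9) l' (1) l'(2)] G_def by simp
    have "\<not> l' < l"
    proof
      assume "l' < l"
      hence "F l' \<subset> F l" using flag_mono(2)[OF flag] l l' by auto
      hence "flag_type R K F l' < flag_type R K F l"
        using dim_strict[OF K fd[OF l] sub[OF l'(1)]] unfolding flag_type_def by auto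
      thus False using tl l' by auto
    qed
    hence "F l \<subseteq> F l'" using flag_mono(1)[OF flag] l l' by auto
    hence UG: "F l \<subseteq> G" using Fl' by simp
    define U where "U = F l"
    define s where "s = flag_type R K F l"
    have Uc: "U \<subseteq> carrier R" using Fc l U_def by auto
    have int: "U \<inter> scal_mult R U \<beta> = {\<zero>}"
    proof
      show "{\<zero>} \<subseteq> U \<inter> scal_mult R U \<beta>"
        using F0[OF l] b unfolding U_def scal_mult_def by force
    next
      show "U \<inter> scal_mult R U \<beta> \<subseteq> {\<zero>}"
      proof
        fix x assume x: "x \<in> U \<inter> scal_mult R U \<beta>"
        then obtain u where u: "u \<in> U" "x = u \<otimes> \<beta>" unfolding scal_mult_def by auto
        show "x \<in> {\<zero>}"
        proof (cases "u = \<zero>")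
          case True thus ?thesis using u b by simp
        next
          case False
          have uc: "u \<in> carrier R" using u Uc by auto
          have uG: "u [^] (q ^ t i) = u" and xG: "x [^] (q ^ t i) = x"
            using u x UG U_def unfolding G_def GF_sub_def by auto
          have "u \<otimes> \<beta> [^] (q ^ t i) = u \<otimes> \<beta>"
            using xG u uG uc b by (simp add: nat_pow_distrib)
          hence "\<beta> [^] (q ^ t i) = \<beta>" using m_lcancel[OF False uc] b by simp
          hence "\<beta> \<in> G" using b unfolding G_def GF_sub_def by auto
          thus ?thesis using bnG by simp
        qed
      qed
    qed
    have dU: "dimension s K U" using dimF[OF l] U_def s_def by simp
    have dUb: "dimension s K (scal_mult R U \<beta>)" using dim_scal[OF K dU b] unfolding scal_mult_def .
    have d0: "dimension 0 K (U \<inter> scal_mult R U \<beta>)" using int by simp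
    have "(dim over K) (U <+>\<^bsub>R\<^esub> scal_mult R U \<beta>) = (dim over K) U + (dim over K) (scal_mult R U \<beta>) - (dim over K) (U \<inter> scal_mult R U \<beta>)"
      using sum_space_dim(2)[OF K finite_dimensionI[OF dU] finite_dimensionI[OF dUb]] by simp
    moreover have "(dim over K) U = s" "(dim over K) (scal_mult R U \<beta>) = s"
      "(dim over K) (U \<inter> scal_mult R U \<beta>) = 0"
      using dimI[OF K dU] dimI[OF K dUb] dimI[OF K d0] by auto
    ultimately show "subspace_dist R K (F l) (scal_mult R (F l) \<beta>) = 2 * flag_type R K F l"
      unfolding subspace_dist_def using U_def s_def by (simp add: over_def)
  qed
qed

end
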